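(* Let $(X,x)$ be a pointed diffeological space and let $A$ be a $D$-open neighbourhood of $x$ in $X$, equipped with the sub-diffeology of $X$. Then the inclusion map $A\hookrightarrow X$ induces an isomorphism $T_x(A)\cong T_x(X)$.
   Context: A diffeological space is a set $X$ together with, for every open subset $U$ of every $\mathbb{R}^n$, a set of functions $U\to X$ called plots, such that constant maps are plots, the composite of a plot with a smooth map between open subsets of Euclidean spaces is a plot, and a function which is locally a plot is a plot; smooth maps send plots to plots. The $D$-topology on $X$ is the final topology with respect to all plots; a subset is $D$-open if its preimage under every plot is open. The sub-diffeology on $A\subseteq X$ consists of all maps $U\to A$ whose composite with the inclusion is a plot of $X$. The internal tangent space $T_x(X)$ is the colimit in the category of real vector spaces of the functor on the category whose objects are plots $p:U\to X$ with $U$ a connected open neighbourhood of $0$ in some $\mathbb{R}^n$ and $p(0)=x$, and whose morphisms $p\to q$ (for $q:V\to X$) are smooth maps $f:U\to V$ with $f(0)=0$ and $q\circ f=p$, sending $p$ to $T_0(U)$ and $f$ to $f_*:T_0(U)\to T_0(V)$. Smooth pointed maps induce linear maps between internal tangent spaces. *)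

theory Defs
  imports "HOL-Analysis.Analysis"
begin

text \<open>Since the dimension n varies inside the definition of a diffeology, R^n is encoded as
  the subset of nat => real of vectors vanishing at all indices >= n, with the (product =
  Euclidean) topology.\<close>

definition Eucl :: "nat \<Rightarrow> (nat \<Rightarrow> real) set" where
  "Eucl n = {v. \<forall>i\<ge>n. v i = 0}"

definition origin :: "nat \<Rightarrow> real" where
  "origin = (\<lambda>_. 0)"

definition eopen :: "nat \<Rightarrow> (nat \<Rightarrow> real) set \<Rightarrow> bool" where
  "eopen n U \<longleftrightarrow> U \<subseteq> Eucl n \<and> openin (top_of_set (Eucl n)) U"

definition pderiv_at :: "((nat \<Rightarrow> real) \<Rightarrow> real) \<Rightarrow> nat \<Rightarrow> (nat \<Rightarrow> real) \<Rightarrow> real" where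
  "pderiv_at g i u = deriv (\<lambda>t. g (u(i := u i + t))) 0"

fun Ck :: "nat \<Rightarrow> (nat \<Rightarrow> real) set \<Rightarrow> nat \<Rightarrow> ((nat \<Rightarrow> real) \<Rightarrow> real) \<Rightarrow> bool" where
  "Ck m V 0 g = continuous_on V g"
| "Ck m V (Suc k) g = (continuous_on V g \<and>
     (\<forall>i<m. \<exists>h. (\<forall>v\<in>V. ((\<lambda>t. g (v(i := v i + t))) has_real_derivative h v) (at 0))
                 \<and> Ck m V k h))"

definition smooth_fn :: "nat \<Rightarrow> (nat \<Rightarrow> real) set \<Rightarrow> ((nat \<Rightarrow> real) \<Rightarrow> real) \<Rightarrow> bool" where
  "smooth_fn m V g \<longleftrightarrow> (\<forall>k. Ck m V k g)"

definition smooth_map ::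
  "nat \<Rightarrow> (nat \<Rightarrow> real) set \<Rightarrow> nat \<Rightarrow> (nat \<Rightarrow> real) set \<Rightarrow> ((nat \<Rightarrow> real) \<Rightarrow> (nat \<Rightarrow> real)) \<Rightarrow> bool" where
  "smooth_map m V n U f \<longleftrightarrow> eopen m V \<and> eopen n U \<and> f ` V \<subseteq> U \<and>
     (\<forall>j<n. smooth_fn m V (\<lambda>v. f v j))"

text \<open>A diffeology on the set X is given by the predicate P: P n U p means that U is an open
  subset of R^n and p restricted to U is a plot U -> X (values of p outside U are irrelevant).\<close>

type_synonym 'a plots = "nat \<Rightarrow> (nat \<Rightarrow> real) set \<Rightarrow> ((nat \<Rightarrow> real) \<Rightarrow> 'a) \<Rightarrow> bool"

definition diffeology :: "'a set \<Rightarrow> 'a plots \<Rightarrow> bool" where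
  "diffeology X P \<longleftrightarrow>
     (\<forall>n U p. P n U p \<longrightarrow> eopen n U \<and> p ` U \<subseteq> X) \<and>
     (\<forall>n U p q. P n U p \<longrightarrow> (\<forall>u\<in>U. p u = q u) \<longrightarrow> P n U q) \<and>
     (\<forall>n U x. eopen n U \<longrightarrow> x \<in> X \<longrightarrow> P n U (\<lambda>_. x)) \<and>
     (\<forall>n U p m V f. P n U p \<longrightarrow> smooth_map m V n U f \<longrightarrow> P m V (p \<circ> f)) \<and>
     (\<forall>n U p. eopen n U \<longrightarrow> p ` U \<subseteq> X \<longrightarrow>
        (\<forall>u\<in>U. \<exists>W. u \<in> W \<and> W \<subseteq> U \<and> eopen n W \<and> P n W p) \<longrightarrow> P n U p)"

definition D_open :: "'a set \<Rightarrow> 'a plots \<Rightarrow> 'a set \<Rightarrow> bool" where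
  "D_open X P A \<longleftrightarrow> A \<subseteq> X \<and>
     (\<forall>n U p. P n U p \<longrightarrow> openin (top_of_set U) {u\<in>U. p u \<in> A})"

definition subplots :: "'a plots \<Rightarrow> 'a set \<Rightarrow> 'a plots" where
  "subplots P A = (\<lambda>n U p. P n U p \<and> p ` U \<subseteq> A)"

type_synonym 'a tobj = "nat \<times> (nat \<Rightarrow> real) set \<times> ((nat \<Rightarrow> real) \<Rightarrow> 'a)"

text \<open>objects of the indexing category: plots p : U -> X, U connected open nbhd of 0, p 0 = x\<close>
definition tobj :: "'a plots \<Rightarrow> 'a \<Rightarrow> 'a tobj \<Rightarrow> bool" where
  "tobj P x ob \<longleftrightarrow> (case ob of (n, U, p) \<Rightarrow> P n U p \<and> connected U \<and> origin \<in> U \<and> p origin = x)"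

definition tmor :: "'a tobj \<Rightarrow> 'a tobj \<Rightarrow> ((nat \<Rightarrow> real) \<Rightarrow> (nat \<Rightarrow> real)) \<Rightarrow> bool" where
  "tmor o1 o2 f \<longleftrightarrow> (case o1 of (n, U, p) \<Rightarrow> case o2 of (m, V, q) \<Rightarrow>
      smooth_map n U m V f \<and> f origin = origin \<and> (\<forall>u\<in>U. q (f u) = p u))"

text \<open>f_* : T_0(U) -> T_0(V), the derivative (Jacobian) of f at 0, where T_0(R^n) = R^n\<close>
definition push_vec :: "nat \<Rightarrow> ((nat \<Rightarrow> real) \<Rightarrow> (nat \<Rightarrow> real)) \<Rightarrow> (nat \<Rightarrow> real) \<Rightarrow> (nat \<Rightarrow> real)" where
  "push_vec n f v = (\<lambda>j. \<Sum>i<n. v i * pderiv_at (\<lambda>u. f u j) i origin)"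

definition vzero :: "'o \<Rightarrow> nat \<Rightarrow> real" where "vzero = (\<lambda>ob j. 0)"
definition vadd :: "('o \<Rightarrow> nat \<Rightarrow> real) \<Rightarrow> ('o \<Rightarrow> nat \<Rightarrow> real) \<Rightarrow> ('o \<Rightarrow> nat \<Rightarrow> real)" where
  "vadd s t = (\<lambda>ob j. s ob j + t ob j)"
definition vdiff :: "('o \<Rightarrow> nat \<Rightarrow> real) \<Rightarrow> ('o \<Rightarrow> nat \<Rightarrow> real) \<Rightarrow> ('o \<Rightarrow> nat \<Rightarrow> real)" where
  "vdiff s t = (\<lambda>ob j. s ob j - t ob j)"
definition vscale :: "real \<Rightarrow> ('o \<Rightarrow> nat \<Rightarrow> real) \<Rightarrow> ('o \<Rightarrow> nat \<Rightarrow> real)" where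
  "vscale c s = (\<lambda>ob j. c * s ob j)"
definition vsingle :: "'o \<Rightarrow> (nat \<Rightarrow> real) \<Rightarrow> ('o \<Rightarrow> nat \<Rightarrow> real)" where
  "vsingle o0 w = (\<lambda>ob. if ob = o0 then w else origin)"

inductive_set lspan :: "('o \<Rightarrow> nat \<Rightarrow> real) set \<Rightarrow> ('o \<Rightarrow> nat \<Rightarrow> real) set" for G where
  zero: "vzero \<in> lspan G"
| step: "g \<in> G \<Longrightarrow> s \<in> lspan G \<Longrightarrow> vadd (vscale c g) s \<in> lspan G"

text \<open>the direct sum of the T_0(U) = R^n over all objects (n,U,p)\<close>
definition dsum :: "'a plots \<Rightarrow> 'a \<Rightarrow> ('a tobj \<Rightarrow> nat \<Rightarrow> real) set" where
  "dsum P x = {s. finite {ob. s ob \<noteq> origin} \<and>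
                  (\<forall>ob. s ob \<noteq> origin \<longrightarrow> tobj P x ob \<and> s ob \<in> Eucl (fst ob))}"

text \<open>colimit relations: iota_p(v) - iota_q(f_* v) for every morphism f : p -> q\<close>
definition trel :: "'a plots \<Rightarrow> 'a \<Rightarrow> ('a tobj \<Rightarrow> nat \<Rightarrow> real) set" where
  "trel P x = {vdiff (vsingle o1 v) (vsingle o2 (push_vec (fst o1) f v)) | o1 o2 f v.
                 tobj P x o1 \<and> tobj P x o2 \<and> tmor o1 o2 f \<and> v \<in> Eucl (fst o1)}"

definition tclass :: "'a plots \<Rightarrow> 'a \<Rightarrow> ('a tobj \<Rightarrow> nat \<Rightarrow> real) \<Rightarrow> ('a tobj \<Rightarrow> nat \<Rightarrow> real) set" where
  "tclass P x s = {t \<in> dsum P x. vdiff t s \<in> lspan (trel P x)}"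

text \<open>T_x(X) = colim = dsum / span(trel), as the set of cosets\<close>
definition tspace :: "'a plots \<Rightarrow> 'a \<Rightarrow> ('a tobj \<Rightarrow> nat \<Rightarrow> real) set set" where
  "tspace P x = tclass P x ` dsum P x"

definition obj_map :: "('a \<Rightarrow> 'b) \<Rightarrow> 'a tobj \<Rightarrow> 'b tobj" where
  "obj_map \<phi> ob = (case ob of (n, U, p) \<Rightarrow> (n, U, \<phi> \<circ> p))"

definition push_sum :: "('a \<Rightarrow> 'b) \<Rightarrow> ('a tobj \<Rightarrow> nat \<Rightarrow> real) \<Rightarrow> ('b tobj \<Rightarrow> nat \<Rightarrow> real)" where
  "push_sum \<phi> s = (\<lambda>ob' j. \<Sum>ob\<in>{ob. s ob \<noteq> origin \<and> obj_map \<phi> ob = ob'}. s ob j)"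

definition tmap :: "'b plots \<Rightarrow> 'a \<Rightarrow> ('a \<Rightarrow> 'b) \<Rightarrow> ('a tobj \<Rightarrow> nat \<Rightarrow> real) set \<Rightarrow> ('b tobj \<Rightarrow> nat \<Rightarrow> real) set" where
  "tmap Q x \<phi> C = {t \<in> dsum Q (\<phi> x). \<exists>s\<in>C. vdiff t (push_sum \<phi> s) \<in> lspan (trel Q (\<phi> x))}"

end

theory Submission
  imports Defs
begin


definition supp :: "('o \<Rightarrow> nat \<Rightarrow> real) \<Rightarrow> 'o set" where
  "supp s = {ob. s ob \<noteq> origin}"

lemma lspan_add: "s \<in> lspan G \<Longrightarrow> t \<in> lspan G \<Longrightarrow> vadd s t \<in> lspan G"
proof (induction s rule: lspan.induct)
  case zero then show ?case by (simp add: vadd_def vzero_def)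
next
  case (step g s c)
  have "vadd (vadd (vscale c g) s) t = vadd (vscale c g) (vadd s t)"
    by (simp add: vadd_def fun_eq_iff)
  then show ?case using step by (simp add: lspan.step)
qed

lemma lspan_scale: "s \<in> lspan G \<Longrightarrow> vscale a s \<in> lspan G"
proof (induction s rule: lspan.induct)
  case zero then show ?case by (simp add: vscale_def vzero_def lspan.zero[unfolded vzero_def])
next
  case (step g s c)
  have "vscale a (vadd (vscale c g) s) = vadd (vscale (a*c) g) (vscale a s)"
    by (simp add: vadd_def vscale_def fun_eq_iff algebra_simps)
  then show ?case using step by (simp add: lspan.step)
qed

lemma lspan_gen: "g \<in> G \<Longrightarrow> g \<in> lspan G"
proof -
  assume "g \<in> G"
  then have "vadd (vscale 1 g) vzero \<in> lspan G" by (intro lspan.step lspan.zero)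
  moreover have "vadd (vscale 1 g) vzero = g" by (simp add: vadd_def vscale_def vzero_def)
  ultimately show ?thesis by simp
qed

lemma lspan_diff: "s \<in> lspan G \<Longrightarrow> t \<in> lspan G \<Longrightarrow> vdiff s t \<in> lspan G"
proof -
  assume "s \<in> lspan G" "t \<in> lspan G"
  then have "vadd s (vscale (-1) t) \<in> lspan G" by (intro lspan_add lspan_scale)
  moreover have "vadd s (vscale (-1) t) = vdiff s t" by (simp add: vadd_def vscale_def vdiff_def fun_eq_iff)
  ultimately show ?thesis by simp
qed

lemma lspan_mono: assumes "G \<subseteq> H" "s \<in> lspan G" shows "s \<in> lspan H"
  using assms(2) by (induction s rule: lspan.induct) (use assms(1) in \<open>auto intro: lspan.intros\<close>)

lemma finite_supp_add: "finite (supp s) \<Longrightarrow> finite (supp t) \<Longrightarrow> finite (supp (vadd s t))"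
  by (rule finite_subset[of _ "supp s \<union> supp t"]) (auto simp: supp_def vadd_def origin_def fun_eq_iff)
lemma finite_supp_scale: "finite (supp s) \<Longrightarrow> finite (supp (vscale c s))"
  by (rule finite_subset[of _ "supp s"]) (auto simp: supp_def vscale_def origin_def fun_eq_iff)
lemma finite_supp_diff: "finite (supp s) \<Longrightarrow> finite (supp t) \<Longrightarrow> finite (supp (vdiff s t))"
  by (rule finite_subset[of _ "supp s \<union> supp t"]) (auto simp: supp_def vdiff_def origin_def fun_eq_iff)
lemma finite_supp_single: "finite (supp (vsingle ob w))"
  by (rule finite_subset[of _ "{ob}"]) (auto simp: supp_def vsingle_def)
lemma finite_supp_zero: "finite (supp vzero)"
  by (simp add: supp_def vzero_def origin_def)

lemma lspan_finite: assumes "\<And>g. g \<in> G \<Longrightarrow> finite (supp g)" "s \<in> lspan G" shows "finite (supp s)"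
  using assms(2) by (induction s rule: lspan.induct) (auto intro: finite_supp_zero finite_supp_add finite_supp_scale assms(1))

lemma trel_finite: "g \<in> trel P x \<Longrightarrow> finite (supp g)"
  by (auto simp: trel_def intro!: finite_supp_diff finite_supp_single)

lemma dsum_finite: "s \<in> dsum P x \<Longrightarrow> finite (supp s)"
  by (simp add: dsum_def supp_def)

lemma dsum_memD: "s \<in> dsum P x \<Longrightarrow> s ob \<noteq> origin \<Longrightarrow> tobj P x ob \<and> s ob \<in> Eucl (fst ob)"
  unfolding dsum_def by blast

lemma dsum_Eucl: "s \<in> dsum P x \<Longrightarrow> s ob \<in> Eucl (fst ob)"
  using dsum_memD[of s P x ob] by (cases "s ob = origin") (auto simp: Eucl_def origin_def)

lemma dsum_add_single:
  assumes "s \<in> dsum P x" "tobj P x ob" "w \<in> Eucl (fst ob)"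
  shows "vadd s (vsingle ob w) \<in> dsum P x"
proof -
  have "finite (supp (vadd s (vsingle ob w)))"
    using assms by (intro finite_supp_add finite_supp_single dsum_finite)
  moreover have "tobj P x o' \<and> vadd s (vsingle ob w) o' \<in> Eucl (fst o')"
    if "vadd s (vsingle ob w) o' \<noteq> origin" for o'
  proof (cases "o' = ob")
    case True
    have "s ob \<in> Eucl (fst ob)"
      using assms(1) by (rule dsum_Eucl)
    then show ?thesis using True assms by (auto simp: vadd_def vsingle_def Eucl_def)
  next
    case False
    then have "s o' \<noteq> origin" using that by (auto simp: vadd_def vsingle_def origin_def fun_eq_iff)
    then show ?thesis using False dsum_memD[OF assms(1)] by (auto simp: vadd_def vsingle_def origin_def)
  qed
  ultimately show ?thesis by (auto simp: dsum_def supp_def)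
qed

lemma dsum_zero: "vzero \<in> dsum P x"
  by (simp add: dsum_def vzero_def origin_def)

lemma dsum_induct:
  assumes "s \<in> dsum P x" "R vzero"
    "\<And>s ob w. R s \<Longrightarrow> s \<in> dsum P x \<Longrightarrow> tobj P x ob \<Longrightarrow> w \<in> Eucl (fst ob) \<Longrightarrow> R (vadd s (vsingle ob w))"
  shows "R s"
proof -
  have "\<forall>s. supp s = F \<longrightarrow> s \<in> dsum P x \<longrightarrow> R s" if "finite F" for F
    using that
  proof (induction F rule: finite_induct)
    case empty
    { fix s assume "supp s = {}"
      then have "s = vzero" by (auto simp: supp_def vzero_def fun_eq_iff origin_def) }
    then show ?case using assms(2) by auto
  next
    case (insert ob F)
    show ?case
    proof (intro allI impI)
      fix s assume s: "supp s = insert ob F" "s \<in> dsum P x"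
      define s0 where "s0 = s(ob := origin)"
      have "supp s0 = supp s - {ob}" by (auto simp: supp_def s0_def)
      then have "supp s0 = F" using s(1) insert.hyps(2) by simp
      moreover have "s0 \<in> dsum P x"
      proof -
        have "{ob. s0 ob \<noteq> origin} \<subseteq> supp s" by (auto simp: s0_def supp_def)
        then have "finite {ob. s0 ob \<noteq> origin}" using dsum_finite[OF s(2)] by (rule finite_subset)
        moreover have "\<forall>o'. s0 o' \<noteq> origin \<longrightarrow> tobj P x o' \<and> s0 o' \<in> Eucl (fst o')"
        proof (intro allI impI)
          fix o' assume "s0 o' \<noteq> origin"
          then have "o' \<noteq> ob" by (auto simp: s0_def)
          then have e: "s0 o' = s o'" by (simp add: s0_def)
          then have "s o' \<noteq> origin" using \<open>s0 o' \<noteq> origin\<close> by simp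
          from dsum_memD[OF s(2) this] e show "tobj P x o' \<and> s0 o' \<in> Eucl (fst o')" by simp
        qed
        ultimately show ?thesis unfolding dsum_def by blast
      qed
      ultimately have "R s0" using insert.IH by simp
      have "ob \<in> supp s" using s(1) by simp
      then have ob: "s ob \<noteq> origin" by (simp add: supp_def)
      then have "tobj P x ob" "s ob \<in> Eucl (fst ob)" using dsum_memD[OF s(2)] by auto
      have eq: "s = vadd s0 (vsingle ob (s ob))"
      proof (rule ext)
        fix o'
        have r: "vadd s0 (vsingle ob (s ob)) o' = (\<lambda>j. s0 o' j + (if o' = ob then s ob else origin) j)"
          unfolding vadd_def vsingle_def by (rule refl)
        show "s o' = vadd s0 (vsingle ob (s ob)) o'"
        proof (cases "o' = ob")
          case True
          have "s0 o' = origin" unfolding s0_def True by simp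
          from this True show ?thesis unfolding r by (simp add: origin_def)
        next
          case False
          have "s0 o' = s o'" unfolding s0_def using False by simp
          from this False show ?thesis unfolding r by (simp add: origin_def)
        qed
      qed
      have "R (vadd s0 (vsingle ob (s ob)))" by (rule assms(3)[OF \<open>R s0\<close> \<open>s0 \<in> dsum P x\<close> \<open>tobj P x ob\<close> \<open>s ob \<in> Eucl (fst ob)\<close>])
      then show "R s" by (rule ssubst[OF eq])
    qed
  qed
  then show ?thesis using assms(1) dsum_finite[OF assms(1)] by simp
qed



lemma Ck_mono: "Ck m V k g \<Longrightarrow> V' \<subseteq> V \<Longrightarrow> Ck m V' k g"
proof (induction k arbitrary: g)
  case 0 then show ?case by (auto intro: continuous_on_subset)
next
  case (Suc k)
  show ?case
  proof -
    have c: "continuous_on V' g" using Suc.prems by (auto intro: continuous_on_subset)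
    have "\<forall>i<m. \<exists>h. (\<forall>v\<in>V'. ((\<lambda>t. g (v(i := v i + t))) has_real_derivative h v) (at 0)) \<and> Ck m V' k h"
    proof (intro allI impI)
      fix i assume "i < m"
      then obtain h where "\<forall>v\<in>V. ((\<lambda>t. g (v(i := v i + t))) has_real_derivative h v) (at 0)" "Ck m V k h"
        using Suc.prems(1) by auto
      then show "\<exists>h. (\<forall>v\<in>V'. ((\<lambda>t. g (v(i := v i + t))) has_real_derivative h v) (at 0)) \<and> Ck m V' k h"
        using Suc.IH Suc.prems(2) by blast
    qed
    then show ?thesis using c by simp
  qed
qed

lemma Ck_const: "Ck m V k (\<lambda>_. c)"
proof (induction k arbitrary: c)
  case 0 then show ?case by simp
next
  case (Suc k)
  have "((\<lambda>t. c) has_real_derivative 0) (at 0)" by (rule DERIV_const)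
  then have "\<forall>i<m. \<exists>h. (\<forall>v\<in>V. ((\<lambda>t. c) has_real_derivative h v) (at 0)) \<and> Ck m V k h"
  proof (intro allI impI exI conjI ballI)
    show "Ck m V k (\<lambda>_. 0)" by (rule Suc.IH)
    fix v show "((\<lambda>t. c) has_real_derivative (\<lambda>_. 0) v) (at 0)" by (rule DERIV_const)
  qed
  then show ?case by simp
qed

lemma Ck_coord: "Ck m V k (\<lambda>v. v j)"
proof (cases k)
  case 0
  have "continuous_on V (\<lambda>v::nat\<Rightarrow>real. v j)"
    by (rule continuous_on_subset[OF continuous_on_product_coordinates]) simp
  then show ?thesis using 0 by simp
next
  case (Suc k')
  have "\<forall>i<m. \<exists>h. (\<forall>v\<in>V. ((\<lambda>t. (v(i := v i + t)) j) has_real_derivative h v) (at 0)) \<and> Ck m V k' h"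
  proof (intro allI impI)
    fix i assume "i < m"
    show "\<exists>h. (\<forall>v\<in>V. ((\<lambda>t. (v(i := v i + t)) j) has_real_derivative h v) (at 0)) \<and> Ck m V k' h"
    proof (cases "i = j")
      case True
      have "((\<lambda>t. (v(i := v i + t)) j) has_real_derivative 1) (at 0)" if "v \<in> V" for v :: "nat \<Rightarrow> real"
        using True by (auto intro!: derivative_eq_intros)
      then show ?thesis by (intro exI[of _ "\<lambda>_. (1::real)"] conjI ballI Ck_const)
    next
      case False
      have "((\<lambda>t. (v(i := v i + t)) j) has_real_derivative 0) (at 0)" if "v \<in> V" for v :: "nat \<Rightarrow> real"
        using False by (simp add: DERIV_const)
      then show ?thesis by (intro exI[of _ "\<lambda>_. (0::real)"] conjI ballI Ck_const)
    qed
  qed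
  moreover have "continuous_on V (\<lambda>v::nat\<Rightarrow>real. v j)"
    by (rule continuous_on_subset[OF continuous_on_product_coordinates]) simp
  ultimately show ?thesis using Suc by simp
qed

lemma smooth_map_restrict:
  assumes "smooth_map n U m V f" "eopen n U'" "U' \<subseteq> U" "eopen m V'" "f ` U' \<subseteq> V'"
  shows "smooth_map n U' m V' f"
  using assms unfolding smooth_map_def smooth_fn_def by (blast intro: Ck_mono)

lemma smooth_map_incl:
  assumes "eopen n W" "eopen n U" "W \<subseteq> U"
  shows "smooth_map n W n U id"
  using assms unfolding smooth_map_def smooth_fn_def by (simp add: Ck_coord)

lemma smooth_map_cont:
  assumes "smooth_map n U m V f"
  shows "continuous_on U f"
proof (rule continuous_on_coordinatewise_then_product)
  fix j
  show "continuous_on U (\<lambda>x. f x j)"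
  proof (cases "j < m")
    case True
    then have "Ck n U 0 (\<lambda>v. f v j)" using assms unfolding smooth_map_def smooth_fn_def by blast
    then show ?thesis by simp
  next
    case False
    have "f u j = 0" if "u \<in> U" for u
    proof -
      have "f u \<in> V" using assms that unfolding smooth_map_def by blast
      then have "f u \<in> Eucl m" using assms unfolding smooth_map_def eopen_def by blast
      then show ?thesis using False by (simp add: Eucl_def)
    qed
    then show ?thesis using continuous_on_cong[of U U "\<lambda>x. f x j" "\<lambda>_. 0"] by auto
  qed
qed

lemma pderiv_coord: "pderiv_at (\<lambda>u. u j) i origin = (if i = j then 1 else 0)"
proof (cases "i = j")
  case True
  have "((\<lambda>t. (origin(i := origin i + t)) j) has_real_derivative 1) (at 0)"
    using True by (auto simp: origin_def intro!: derivative_eq_intros)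
  then show ?thesis using True unfolding pderiv_at_def by (simp add: DERIV_imp_deriv)
next
  case False
  have "((\<lambda>t. (origin(i := origin i + t)) j) has_real_derivative 0) (at 0)"
    using False by (simp add: DERIV_const)
  then show ?thesis using False unfolding pderiv_at_def by (simp add: DERIV_imp_deriv)
qed

lemma push_vec_id: "v \<in> Eucl n \<Longrightarrow> push_vec n id v = v"
  unfolding push_vec_def
  by (auto simp: fun_eq_iff pderiv_coord Eucl_def if_distrib[of "(*) _"] sum.delta cong: if_cong)



lemma cube:
  assumes "openin (top_of_set (Eucl n)) S" "a \<in> S"
  shows "\<exists>C. openin (top_of_set (Eucl n)) C \<and> connected C \<and> a \<in> C \<and> C \<subseteq> S"
proof -
  obtain T where T: "open T" "S = T \<inter> Eucl n" using assms(1) by (auto simp: openin_open)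
  have aT: "a \<in> T" using T assms(2) by blast
  have aE: "a \<in> Eucl n" using T assms(2) by blast
  have "openin (product_topology (\<lambda>i. euclidean) UNIV) T" using T(1) by (simp add: open_fun_def)
  from product_topology_open_contains_basis[OF this aT] obtain X where
    X: "a \<in> (\<Pi>\<^sub>E i\<in>UNIV. X i)" "\<forall>i. openin euclidean (X i)"
       "finite {i. X i \<noteq> topspace euclidean}" "(\<Pi>\<^sub>E i\<in>UNIV. X i) \<subseteq> T" by blast
  define F where "F = {i. X i \<noteq> UNIV}"
  have finF: "finite F" using X(3) by (simp add: F_def)
  have "\<forall>i\<in>F. \<exists>e>0. ball (a i) e \<subseteq> X i"
  proof
    fix i assume "i \<in> F"
    have "open (X i)" using X(2) by simp
    moreover have "a i \<in> X i" using X(1) by (simp add: PiE_iff)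
    ultimately show "\<exists>e>0. ball (a i) e \<subseteq> X i" by (simp add: open_contains_ball)
  qed
  then obtain e where e: "\<And>i. i \<in> F \<Longrightarrow> e i > 0 \<and> ball (a i) (e i) \<subseteq> X i" by metis
  define d where "d = Min (insert 1 (e ` F))"
  have d0: "d > 0" unfolding d_def using finF e by (simp add: Min_gr_iff)
  have de: "d \<le> e i" if "i \<in> F" for i unfolding d_def using finF that by (intro Min_le) auto
  define C where "C = Eucl n \<inter> {f. \<forall>i\<in>F. f (id i) \<in> ball (a i) d}"
  have "open {f. \<forall>i\<in>F. f (id i) \<in> ball (a i) d}"
    by (rule product_topology_basis') (use finF in auto)
  then have oC: "openin (top_of_set (Eucl n)) C" unfolding C_def by (simp add: openin_open_Int)
  have aC: "a \<in> C" using aE d0 by (simp add: C_def)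
  have CS: "C \<subseteq> S"
  proof
    fix f assume f: "f \<in> C"
    have "f i \<in> X i" for i
    proof (cases "i \<in> F")
      case True
      then have "f i \<in> ball (a i) d" using f by (simp add: C_def)
      also have "\<dots> \<subseteq> ball (a i) (e i)" using de[OF True] by (rule subset_ball)
      also have "\<dots> \<subseteq> X i" using e[OF True] by blast
      finally show ?thesis .
    next
      case False then show ?thesis by (simp add: F_def)
    qed
    then have "f \<in> (\<Pi>\<^sub>E i\<in>UNIV. X i)" by (simp add: PiE_iff)
    then have "f \<in> T" using X(4) by blast
    then show "f \<in> S" using f T(2) by (simp add: C_def)
  qed
  have "path_connected C"
    unfolding path_connected_def
  proof (intro ballI)
    fix b c assume b: "b \<in> C" and c: "c \<in> C"
    define g where "g = (\<lambda>t::real. (\<lambda>i. (1 - t) * b i + t * c i))"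
    have "continuous_on {0..1} g" unfolding g_def
      by (intro continuous_on_coordinatewise_then_product continuous_intros)
    then have "path g" by (simp add: path_def)
    moreover have "path_image g \<subseteq> C"
    proof
      fix y assume "y \<in> path_image g"
      then obtain t where t: "t \<in> {0..1}" "y = g t" by (auto simp: path_image_def)
      have "y \<in> Eucl n" using b c t by (simp add: C_def Eucl_def g_def)
      moreover have "y i \<in> ball (a i) d" if "i \<in> F" for i
      proof -
        have "b i \<in> ball (a i) d" "c i \<in> ball (a i) d" using b c that by (auto simp: C_def)
        then have "(1 - t) *\<^sub>R b i + t *\<^sub>R c i \<in> ball (a i) d"
          using t by (intro convexD[OF convex_ball]) auto
        then show ?thesis using t by (simp add: g_def)
      qed
      ultimately show "y \<in> C" by (simp add: C_def)
    qed
    moreover have "pathstart g = b" "pathfinish g = c"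
      by (simp_all add: pathstart_def pathfinish_def g_def)
    ultimately show "\<exists>g. path g \<and> path_image g \<subseteq> C \<and> pathstart g = b \<and> pathfinish g = c"
      by blast
  qed
  then have "connected C" by (rule path_connected_imp_connected)
  then show ?thesis using oC aC CS by blast
qed

lemma comp_open:
  assumes "openin (top_of_set (Eucl n)) S"
  shows "openin (top_of_set (Eucl n)) (connected_component_set S a)"
proof (subst openin_subopen, intro ballI)
  fix y assume y: "y \<in> connected_component_set S a"
  then have yS: "y \<in> S" using connected_component_subset by blast
  have eq: "connected_component_set S y = connected_component_set S a"
    using y by (rule connected_component_eq)
  obtain C where C: "openin (top_of_set (Eucl n)) C" "connected C" "y \<in> C" "C \<subseteq> S"
    using cube[OF assms yS] by blast
  then have "C \<subseteq> connected_component_set S y" by (intro connected_component_maximal)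
  then show "\<exists>T. openin (top_of_set (Eucl n)) T \<and> y \<in> T \<and> T \<subseteq> connected_component_set S a"
    using C eq by blast
qed



definition Rm :: "('o \<Rightarrow> 'o) \<Rightarrow> ('o \<Rightarrow> nat \<Rightarrow> real) \<Rightarrow> ('o \<Rightarrow> nat \<Rightarrow> real)" where
  "Rm r s = (\<lambda>ob' j. \<Sum>ob\<in>{ob. s ob \<noteq> origin \<and> r ob = ob'}. s ob j)"

lemma Rm_alt:
  assumes "finite F" "supp s \<subseteq> F"
  shows "Rm r s ob' j = (\<Sum>ob\<in>{ob\<in>F. r ob = ob'}. s ob j)"
  unfolding Rm_def
proof (rule sum.mono_neutral_left)
  show "finite {ob \<in> F. r ob = ob'}" using assms(1) by simp
  show "{ob. s ob \<noteq> origin \<and> r ob = ob'} \<subseteq> {ob \<in> F. r ob = ob'}" using assms(2) by (auto simp: supp_def)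
  show "\<forall>i\<in>{ob \<in> F. r ob = ob'} - {ob. s ob \<noteq> origin \<and> r ob = ob'}. s i j = 0"
    by (auto simp: origin_def)
qed

lemma Rm_add:
  assumes "finite (supp s)" "finite (supp t)"
  shows "Rm r (vadd s t) = vadd (Rm r s) (Rm r t)"
proof (intro ext)
  fix ob' j
  let ?F = "supp s \<union> supp t"
  have f: "finite ?F" using assms by simp
  have "supp (vadd s t) \<subseteq> ?F" by (auto simp: supp_def vadd_def origin_def fun_eq_iff)
  then have "Rm r (vadd s t) ob' j = (\<Sum>ob\<in>{ob\<in>?F. r ob = ob'}. vadd s t ob j)" by (rule Rm_alt[OF f])
  also have "\<dots> = (\<Sum>ob\<in>{ob\<in>?F. r ob = ob'}. s ob j) + (\<Sum>ob\<in>{ob\<in>?F. r ob = ob'}. t ob j)"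
    by (simp add: vadd_def sum.distrib)
  also have "(\<Sum>ob\<in>{ob\<in>?F. r ob = ob'}. s ob j) = Rm r s ob' j" by (rule Rm_alt[symmetric, OF f]) auto
  also have "(\<Sum>ob\<in>{ob\<in>?F. r ob = ob'}. t ob j) = Rm r t ob' j" by (rule Rm_alt[symmetric, OF f]) auto
  finally show "Rm r (vadd s t) ob' j = vadd (Rm r s) (Rm r t) ob' j" by (simp add: vadd_def)
qed

lemma Rm_diff:
  assumes "finite (supp s)" "finite (supp t)"
  shows "Rm r (vdiff s t) = vdiff (Rm r s) (Rm r t)"
proof (intro ext)
  fix ob' j
  let ?F = "supp s \<union> supp t"
  have f: "finite ?F" using assms by simp
  have "supp (vdiff s t) \<subseteq> ?F" by (auto simp: supp_def vdiff_def origin_def fun_eq_iff)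
  then have "Rm r (vdiff s t) ob' j = (\<Sum>ob\<in>{ob\<in>?F. r ob = ob'}. vdiff s t ob j)" by (rule Rm_alt[OF f])
  also have "\<dots> = (\<Sum>ob\<in>{ob\<in>?F. r ob = ob'}. s ob j) - (\<Sum>ob\<in>{ob\<in>?F. r ob = ob'}. t ob j)"
    by (simp add: vdiff_def sum_subtractf)
  also have "(\<Sum>ob\<in>{ob\<in>?F. r ob = ob'}. s ob j) = Rm r s ob' j" by (rule Rm_alt[symmetric, OF f]) auto
  also have "(\<Sum>ob\<in>{ob\<in>?F. r ob = ob'}. t ob j) = Rm r t ob' j" by (rule Rm_alt[symmetric, OF f]) auto
  finally show "Rm r (vdiff s t) ob' j = vdiff (Rm r s) (Rm r t) ob' j" by (simp add: vdiff_def)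
qed

lemma Rm_scale:
  assumes "finite (supp s)"
  shows "Rm r (vscale c s) = vscale c (Rm r s)"
proof (intro ext)
  fix ob' j
  have "supp (vscale c s) \<subseteq> supp s" by (auto simp: supp_def vscale_def origin_def fun_eq_iff)
  then have "Rm r (vscale c s) ob' j = (\<Sum>ob\<in>{ob\<in>supp s. r ob = ob'}. vscale c s ob j)" by (rule Rm_alt[OF assms])
  also have "\<dots> = c * (\<Sum>ob\<in>{ob\<in>supp s. r ob = ob'}. s ob j)"
    by (simp add: vscale_def sum_distrib_left)
  also have "(\<Sum>ob\<in>{ob\<in>supp s. r ob = ob'}. s ob j) = Rm r s ob' j" by (rule Rm_alt[symmetric, OF assms]) auto
  finally show "Rm r (vscale c s) ob' j = vscale c (Rm r s) ob' j" by (simp add: vscale_def)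
qed

lemma Rm_zero: "Rm r vzero = vzero"
  by (simp add: Rm_def vzero_def origin_def)

lemma Rm_single: "Rm r (vsingle ob w) = vsingle (r ob) w"
proof (intro ext)
  fix ob' j
  have "supp (vsingle ob w) \<subseteq> {ob}" by (auto simp: supp_def vsingle_def)
  then have "Rm r (vsingle ob w) ob' j = (\<Sum>q\<in>{q\<in>{ob}. r q = ob'}. vsingle ob w q j)" by (rule Rm_alt[OF finite.insertI[OF finite.emptyI]])
  also have "\<dots> = (if r ob = ob' then w j else 0)"
  proof -
    have "{q\<in>{ob}. r q = ob'} = (if r ob = ob' then {ob} else {})" by auto
    then show ?thesis by (simp add: vsingle_def)
  qed
  finally show "Rm r (vsingle ob w) ob' j = vsingle (r ob) w ob' j"
    by (auto simp: vsingle_def origin_def)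
qed

lemma vdiff_self: "vdiff s s = vzero" by (simp add: vdiff_def vzero_def)

lemma tclass_eq:
  assumes "vdiff s t \<in> lspan (trel P x)"
  shows "tclass P x s = tclass P x t"
proof -
  have 1: "vdiff u t \<in> lspan (trel P x)" if "vdiff u s \<in> lspan (trel P x)" for u
  proof -
    have "vadd (vdiff u s) (vdiff s t) \<in> lspan (trel P x)" using that assms by (rule lspan_add)
    moreover have "vadd (vdiff u s) (vdiff s t) = vdiff u t" by (simp add: vadd_def vdiff_def)
    ultimately show ?thesis by simp
  qed
  have 2: "vdiff u s \<in> lspan (trel P x)" if "vdiff u t \<in> lspan (trel P x)" for u
  proof -
    have "vadd (vdiff u t) (vscale (-1) (vdiff s t)) \<in> lspan (trel P x)"
      using that lspan_scale[OF assms] by (rule lspan_add)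
    moreover have "vadd (vdiff u t) (vscale (-1) (vdiff s t)) = vdiff u s"
      by (simp add: vadd_def vdiff_def vscale_def)
    ultimately show ?thesis by simp
  qed
  show ?thesis unfolding tclass_def using 1 2 by blast
qed

lemma tclass_self: "s \<in> dsum P x \<Longrightarrow> s \<in> tclass P x s"
  by (simp add: tclass_def vdiff_self lspan.zero)

lemma L_diff:
  assumes "\<And>ob. tobj P' x ob \<Longrightarrow> tobj P' x (r ob) \<and> tmor (r ob) ob id \<and> fst (r ob) = fst ob"
    and "s \<in> dsum P' x"
  shows "vdiff s (Rm r s) \<in> lspan (trel P' x)"
proof (rule dsum_induct[where R="\<lambda>s. vdiff s (Rm r s) \<in> lspan (trel P' x)", OF assms(2)])
  show "vdiff vzero (Rm r vzero) \<in> lspan (trel P' x)" by (simp add: Rm_zero vdiff_self lspan.zero)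
next
  fix s ob w
  assume "vdiff s (Rm r s) \<in> lspan (trel P' x)" "s \<in> dsum P' x" "tobj P' x ob" "w \<in> Eucl (fst ob)"
  note 3 = this
  have ob: "tobj P' x (r ob)" "tmor (r ob) ob id" "fst (r ob) = fst ob" using assms(1)[OF 3(3)] by auto
  have w: "w \<in> Eucl (fst (r ob))" using 3(4) ob(3) by simp
  have pv: "push_vec (fst (r ob)) id w = w" using w by (rule push_vec_id)
  define g where "g = vdiff (vsingle (r ob) w) (vsingle ob (push_vec (fst (r ob)) id w))"
  have "g \<in> trel P' x" unfolding g_def trel_def using ob(1) 3(3) ob(2) w by blast
  then have gs: "vscale (-1) g \<in> lspan (trel P' x)" by (intro lspan_scale lspan_gen)
  have R: "Rm r (vadd s (vsingle ob w)) = vadd (Rm r s) (vsingle (r ob) w)"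
    by (simp add: Rm_add dsum_finite[OF 3(2)] finite_supp_single Rm_single)
  have "vdiff (vadd s (vsingle ob w)) (Rm r (vadd s (vsingle ob w))) = vadd (vdiff s (Rm r s)) (vscale (-1) g)"
    unfolding R g_def pv by (simp add: vadd_def vdiff_def vscale_def fun_eq_iff)
  then show "vdiff (vadd s (vsingle ob w)) (Rm r (vadd s (vsingle ob w))) \<in> lspan (trel P' x)"
    using lspan_add[OF 3(1) gs] by simp
qed

lemma L_dsum:
  assumes "\<And>ob. tobj P x ob \<Longrightarrow> tobj Q x (r ob) \<and> fst (r ob) = fst ob"
    and "s \<in> dsum P x"
  shows "Rm r s \<in> dsum Q x"
proof (rule dsum_induct[where R="\<lambda>s. Rm r s \<in> dsum Q x", OF assms(2)])
  show "Rm r vzero \<in> dsum Q x" by (simp add: Rm_zero dsum_zero)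
next
  fix s ob w
  assume "Rm r s \<in> dsum Q x" "s \<in> dsum P x" "tobj P x ob" "w \<in> Eucl (fst ob)"
  note 3 = this
  have R: "Rm r (vadd s (vsingle ob w)) = vadd (Rm r s) (vsingle (r ob) w)"
    by (simp add: Rm_add dsum_finite[OF 3(2)] finite_supp_single Rm_single)
  show "Rm r (vadd s (vsingle ob w)) \<in> dsum Q x"
    unfolding R using 3 assms(1)[OF 3(3)] by (intro dsum_add_single) auto
qed

lemma L_span:
  assumes "\<And>o1 o2 f. tobj P x o1 \<Longrightarrow> tobj P x o2 \<Longrightarrow> tmor o1 o2 f \<Longrightarrow>
      tobj Q x (r o1) \<and> tobj Q x (r o2) \<and> tmor (r o1) (r o2) f \<and> fst (r o1) = fst o1"
    and "d \<in> lspan (trel P x)"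
  shows "Rm r d \<in> lspan (trel Q x)"
  using assms(2)
proof (induction rule: lspan.induct)
  case zero then show ?case by (simp add: Rm_zero lspan.zero)
next
  case (step g s c)
  have fg: "finite (supp g)" using step(1) by (rule trel_finite)
  have fs: "finite (supp s)" by (meson lspan_finite trel_finite step(2))
  have "Rm r g \<in> trel Q x"
  proof -
    obtain o1 o2 f v where g: "g = vdiff (vsingle o1 v) (vsingle o2 (push_vec (fst o1) f v))"
      and h: "tobj P x o1" "tobj P x o2" "tmor o1 o2 f" "v \<in> Eucl (fst o1)"
      using step(1) unfolding trel_def by blast
    have h2: "tobj Q x (r o1)" "tobj Q x (r o2)" "tmor (r o1) (r o2) f" "fst (r o1) = fst o1"
      using assms(1)[OF h(1-3)] by auto
    have "Rm r g = vdiff (vsingle (r o1) v) (vsingle (r o2) (push_vec (fst (r o1)) f v))"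
      unfolding g by (simp add: Rm_diff finite_supp_single Rm_single h2(4))
    moreover have "v \<in> Eucl (fst (r o1))" using h(4) h2(4) by simp
    ultimately show ?thesis unfolding trel_def using h2 by blast
  qed
  then have "vadd (vscale c (Rm r g)) (Rm r s) \<in> lspan (trel Q x)"
    using step(3) by (rule lspan.step)
  then show ?case by (simp add: Rm_add Rm_scale fg fs finite_supp_scale)
qed



lemma diff_plot: assumes "diffeology X P" "P n U p" shows "eopen n U \<and> p ` U \<subseteq> X"
proof -
  have "\<forall>n U p. P n U p \<longrightarrow> eopen n U \<and> p ` U \<subseteq> X"
    using assms(1) unfolding diffeology_def by (rule conjunct1)
  then show ?thesis using assms(2) by blast
qed

lemma diff_comp: assumes "diffeology X P" "P n U p" "smooth_map m V n U f" shows "P m V (p \<circ> f)"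
proof -
  have "\<forall>n U p m V f. P n U p \<longrightarrow> smooth_map m V n U f \<longrightarrow> P m V (p \<circ> f)"
    using assms(1) unfolding diffeology_def by (elim conjE)
  then show ?thesis using assms(2,3) by blast
qed

definition Wset :: "'a set \<Rightarrow> (nat \<Rightarrow> real) set \<Rightarrow> ((nat \<Rightarrow> real) \<Rightarrow> 'a) \<Rightarrow> (nat \<Rightarrow> real) set" where
  "Wset A U p = connected_component_set {u\<in>U. p u \<in> A} origin"

definition rho :: "'a set \<Rightarrow> 'a tobj \<Rightarrow> 'a tobj" where
  "rho A ob = (case ob of (n, U, p) \<Rightarrow> (n, Wset A U p, p))"

lemma W_props:
  assumes "diffeology X P" "D_open X P A" "P n U p" "origin \<in> U" "p origin \<in> A"
  shows "eopen n (Wset A U p) \<and> connected (Wset A U p) \<and> origin \<in> Wset A U p \<and>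
         Wset A U p \<subseteq> U \<and> p ` Wset A U p \<subseteq> A"
proof -
  define S where "S = {u\<in>U. p u \<in> A}"
  have eU: "eopen n U" using diff_plot[OF assms(1,3)] by blast
  have "openin (top_of_set U) S" using assms(2,3) unfolding D_open_def S_def by blast
  moreover have "openin (top_of_set (Eucl n)) U" using eU by (simp add: eopen_def)
  ultimately have oS: "openin (top_of_set (Eucl n)) S" by (rule openin_trans)
  have WS: "Wset A U p \<subseteq> S" unfolding Wset_def S_def[symmetric] by (rule connected_component_subset)
  have "openin (top_of_set (Eucl n)) (Wset A U p)" unfolding Wset_def S_def[symmetric] by (rule comp_open[OF oS])
  moreover have "Wset A U p \<subseteq> Eucl n" using WS eU by (auto simp: S_def eopen_def)
  ultimately have "eopen n (Wset A U p)" by (simp add: eopen_def)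
  moreover have "connected (Wset A U p)" unfolding Wset_def by (rule connected_connected_component)
  moreover have "origin \<in> Wset A U p" unfolding Wset_def
    using assms(4,5) by (simp add: connected_component_refl)
  ultimately show ?thesis using WS by (auto simp: S_def)
qed

lemma tobj_sub: "tobj (subplots P A) x ob \<Longrightarrow> tobj P x ob"
  by (cases ob) (simp add: tobj_def subplots_def)

lemma tobj_rho:
  assumes "diffeology X P" "D_open X P A" "x \<in> A" "tobj P x ob"
  shows "tobj (subplots P A) x (rho A ob) \<and> tmor (rho A ob) ob id \<and> fst (rho A ob) = fst ob"
proof -
  obtain n U p where ob: "ob = (n, U, p)" by (cases ob)
  have h: "P n U p" "connected U" "origin \<in> U" "p origin = x" using assms(4) by (simp_all add: ob tobj_def)
  have W: "eopen n (Wset A U p) \<and> connected (Wset A U p) \<and> origin \<in> Wset A U p \<and>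
         Wset A U p \<subseteq> U \<and> p ` Wset A U p \<subseteq> A"
    using W_props[OF assms(1,2) h(1,3)] h(4) assms(3) by simp
  have eU: "eopen n U" using diff_plot[OF assms(1) h(1)] by blast
  have sm: "smooth_map n (Wset A U p) n U id" using smooth_map_incl W eU by blast
  have "P n (Wset A U p) (p \<circ> id)" by (rule diff_comp[OF assms(1) h(1) sm])
  then have "P n (Wset A U p) p" by simp
  then have "tobj (subplots P A) x (rho A ob)" using W h(4)
    by (simp add: ob rho_def tobj_def subplots_def)
  moreover have "tmor (rho A ob) ob id" using sm by (simp add: ob rho_def tmor_def)
  ultimately show ?thesis by (simp add: ob rho_def)
qed

lemma tmor_rho:
  assumes "diffeology X P" "D_open X P A" "x \<in> A" "tobj P x o1" "tobj P x o2" "tmor o1 o2 f"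
  shows "tmor (rho A o1) (rho A o2) f"
proof -
  obtain n1 U1 p1 where o1: "o1 = (n1, U1, p1)" by (cases o1)
  obtain n2 U2 p2 where o2: "o2 = (n2, U2, p2)" by (cases o2)
  have h1: "P n1 U1 p1" "origin \<in> U1" "p1 origin = x" using assms(4) by (simp_all add: o1 tobj_def)
  have h2: "P n2 U2 p2" "origin \<in> U2" "p2 origin = x" using assms(5) by (simp_all add: o2 tobj_def)
  have m: "smooth_map n1 U1 n2 U2 f" "f origin = origin" "\<forall>u\<in>U1. p2 (f u) = p1 u"
    using assms(6) by (simp_all add: o1 o2 tmor_def)
  have W1: "eopen n1 (Wset A U1 p1) \<and> connected (Wset A U1 p1) \<and> origin \<in> Wset A U1 p1 \<and>
         Wset A U1 p1 \<subseteq> U1 \<and> p1 ` Wset A U1 p1 \<subseteq> A"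
    using W_props[OF assms(1,2) h1(1,2)] h1(3) assms(3) by simp
  have W2: "eopen n2 (Wset A U2 p2)"
    using W_props[OF assms(1,2) h2(1,2)] h2(3) assms(3) by simp
  have cont: "continuous_on (Wset A U1 p1) f"
    using continuous_on_subset[OF smooth_map_cont[OF m(1)]] W1 by blast
  have conn: "connected (f ` Wset A U1 p1)" using connected_continuous_image[OF cont] W1 by blast
  have orig: "origin \<in> f ` Wset A U1 p1" using W1 m(2) by (metis image_eqI)
  have sub: "f ` Wset A U1 p1 \<subseteq> {u\<in>U2. p2 u \<in> A}"
  proof
    fix y assume "y \<in> f ` Wset A U1 p1"
    then obtain u where u: "u \<in> Wset A U1 p1" "y = f u" by blast
    have "u \<in> U1" using u W1 by blast
    then have "f u \<in> U2" using m(1) unfolding smooth_map_def by blast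
    moreover have "p2 (f u) \<in> A" using m(3) \<open>u \<in> U1\<close> u(1) W1 by auto
    ultimately show "y \<in> {u\<in>U2. p2 u \<in> A}" using u by simp
  qed
  have "f ` Wset A U1 p1 \<subseteq> connected_component_set {u\<in>U2. p2 u \<in> A} origin"
    by (rule connected_component_maximal[OF orig conn sub])
  then have "f ` Wset A U1 p1 \<subseteq> Wset A U2 p2" by (simp only: Wset_def)
  then have "smooth_map n1 (Wset A U1 p1) n2 (Wset A U2 p2) f"
    using smooth_map_restrict[OF m(1)] W1 W2 by blast
  moreover have "\<forall>u\<in>Wset A U1 p1. p2 (f u) = p1 u" using m(3) W1 by blast
  ultimately show ?thesis using m(2) by (simp add: o1 o2 rho_def tmor_def)
qed

lemma push_sum_id: "push_sum (\<lambda>a. a) s = s"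
proof (intro ext)
  fix ob' j
  have om: "obj_map (\<lambda>a. a) ob = ob" for ob :: "'b tobj"
    by (cases ob) (simp add: obj_map_def comp_def)
  have "{ob. s ob \<noteq> origin \<and> obj_map (\<lambda>a. a) ob = ob'} = (if s ob' \<noteq> origin then {ob'} else {})"
    by (auto simp: om)
  then show "push_sum (\<lambda>a. a) s ob' j = s ob' j"
    by (auto simp: push_sum_def origin_def)
qed



lemma dsum_sub: assumes "s \<in> dsum (subplots P A) x" shows "s \<in> dsum P x"
proof -
  have "finite {ob. s ob \<noteq> origin}" using dsum_finite[OF assms] by (simp add: supp_def)
  moreover have "\<forall>ob. s ob \<noteq> origin \<longrightarrow> tobj P x ob \<and> s ob \<in> Eucl (fst ob)"
  proof (intro allI impI)
    fix ob assume "s ob \<noteq> origin"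
    from dsum_memD[OF assms this] show "tobj P x ob \<and> s ob \<in> Eucl (fst ob)"
      using tobj_sub[of P A x ob] by blast
  qed
  ultimately show ?thesis unfolding dsum_def by blast
qed

lemma trel_sub: "trel (subplots P A) x \<subseteq> trel P x"
proof
  fix g assume "g \<in> trel (subplots P A) x"
  then obtain o1 o2 f v where g: "g = vdiff (vsingle o1 v) (vsingle o2 (push_vec (fst o1) f v))"
      and h: "tobj (subplots P A) x o1" "tobj (subplots P A) x o2" "tmor o1 o2 f" "v \<in> Eucl (fst o1)"
      unfolding trel_def by blast
  have "tobj P x o1" by (rule tobj_sub[OF h(1)])
  moreover have "tobj P x o2" by (rule tobj_sub[OF h(2)])
  ultimately
  show "g \<in> trel P x" unfolding trel_def using g h(3,4) by blast
qed

lemma lspan_sub: "d \<in> lspan (trel (subplots P A) x) \<Longrightarrow> d \<in> lspan (trel P x)"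
  by (rule lspan_mono[OF trel_sub])

lemma tmap_class:
  assumes "s \<in> dsum (subplots P A) x"
  shows "tmap P x (\<lambda>a. a) (tclass (subplots P A) x s) = tclass P x s"
proof
  show "tmap P x (\<lambda>a. a) (tclass (subplots P A) x s) \<subseteq> tclass P x s"
  proof
    fix t assume "t \<in> tmap P x (\<lambda>a. a) (tclass (subplots P A) x s)"
    then obtain s' where t: "t \<in> dsum P x" "s' \<in> tclass (subplots P A) x s" "vdiff t s' \<in> lspan (trel P x)"
      unfolding tmap_def push_sum_id by blast
    have "vdiff s' s \<in> lspan (trel (subplots P A) x)" using t(2) unfolding tclass_def by blast
    then have "vdiff s' s \<in> lspan (trel P x)" by (rule lspan_sub)
    then have "vadd (vdiff t s') (vdiff s' s) \<in> lspan (trel P x)" using t(3) lspan_add by blast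
    moreover have "vadd (vdiff t s') (vdiff s' s) = vdiff t s" by (simp add: vadd_def vdiff_def)
    ultimately show "t \<in> tclass P x s" using t(1) by (simp add: tclass_def)
  qed
next
  show "tclass P x s \<subseteq> tmap P x (\<lambda>a. a) (tclass (subplots P A) x s)"
  proof
    fix t assume t: "t \<in> tclass P x s"
    have "s \<in> tclass (subplots P A) x s" using assms by (rule tclass_self)
    then show "t \<in> tmap P x (\<lambda>a. a) (tclass (subplots P A) x s)"
      using t unfolding tmap_def push_sum_id tclass_def by blast
  qed
qed

theorem proposition3p6:
  fixes X :: "'a set" and P :: "'a plots" and A :: "'a set" and x :: 'a
  assumes "diffeology X P"
    and "D_open X P A"
    and "x \<in> A"
  shows "bij_betw (tmap P x (\<lambda>a. a)) (tspace (subplots P A) x) (tspace P x)"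
proof -
  let ?Q = "subplots P A"
  let ?r = "rho A"
  have hP: "tobj P x (?r ob) \<and> tmor (?r ob) ob id \<and> fst (?r ob) = fst ob" if "tobj P x ob" for ob
    using tobj_rho[OF assms that] tobj_sub[of P A x "rho A ob"] by blast
  have hQ: "tobj ?Q x (?r ob) \<and> tmor (?r ob) ob id \<and> fst (?r ob) = fst ob" if "tobj ?Q x ob" for ob
    using tobj_rho[OF assms tobj_sub[OF that]] by blast
  have hD: "tobj ?Q x (?r ob) \<and> fst (?r ob) = fst ob" if "tobj P x ob" for ob
    using tobj_rho[OF assms that] by blast
  have hS: "tobj ?Q x (?r o1) \<and> tobj ?Q x (?r o2) \<and> tmor (?r o1) (?r o2) f \<and> fst (?r o1) = fst o1"
    if "tobj P x o1" "tobj P x o2" "tmor o1 o2 f" for o1 o2 f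
    using tobj_rho[OF assms that(1)] tobj_rho[OF assms that(2)] tmor_rho[OF assms that] by blast
  have key: "vdiff s1 s2 \<in> lspan (trel ?Q x)"
    if s: "s1 \<in> dsum ?Q x" "s2 \<in> dsum ?Q x" "vdiff s1 s2 \<in> lspan (trel P x)" for s1 s2
  proof -
    have "Rm ?r (vdiff s1 s2) \<in> lspan (trel ?Q x)" by (rule L_span[OF hS s(3)])
    then have R: "vdiff (Rm ?r s1) (Rm ?r s2) \<in> lspan (trel ?Q x)"
      by (simp add: Rm_diff dsum_finite[OF s(1)] dsum_finite[OF s(2)])
    have a1: "vdiff s1 (Rm ?r s1) \<in> lspan (trel ?Q x)" by (rule L_diff[OF hQ s(1)])
    have a2: "vdiff s2 (Rm ?r s2) \<in> lspan (trel ?Q x)" by (rule L_diff[OF hQ s(2)])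
    have "vadd (vdiff (vdiff s1 (Rm ?r s1)) (vdiff s2 (Rm ?r s2))) (vdiff (Rm ?r s1) (Rm ?r s2)) \<in> lspan (trel ?Q x)"
      by (intro lspan_add lspan_diff a1 a2 R)
    moreover have "vadd (vdiff (vdiff s1 (Rm ?r s1)) (vdiff s2 (Rm ?r s2))) (vdiff (Rm ?r s1) (Rm ?r s2)) = vdiff s1 s2"
      by (simp add: vadd_def vdiff_def fun_eq_iff)
    ultimately show ?thesis by simp
  qed
  have inj: "inj_on (tmap P x (\<lambda>a. a)) (tspace ?Q x)"
  proof (rule inj_onI)
    fix C1 C2 assume C1: "C1 \<in> tspace ?Q x" and C2: "C2 \<in> tspace ?Q x"
      and eq: "tmap P x (\<lambda>a. a) C1 = tmap P x (\<lambda>a. a) C2"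
    obtain s1 where s1: "s1 \<in> dsum ?Q x" "C1 = tclass ?Q x s1" using C1 unfolding tspace_def by blast
    obtain s2 where s2: "s2 \<in> dsum ?Q x" "C2 = tclass ?Q x s2" using C2 unfolding tspace_def by blast
    have "tclass P x s1 = tclass P x s2" using eq unfolding s1(2) s2(2) tmap_class[OF s1(1)] tmap_class[OF s2(1)] .
    moreover have "s1 \<in> tclass P x s1" using dsum_sub[OF s1(1)] by (rule tclass_self)
    ultimately have "vdiff s1 s2 \<in> lspan (trel P x)" unfolding tclass_def by blast
    then have "vdiff s1 s2 \<in> lspan (trel ?Q x)" using key s1(1) s2(1) by blast
    then show "C1 = C2" unfolding s1(2) s2(2) by (rule tclass_eq)
  qed
  have img: "tmap P x (\<lambda>a. a) ` tspace ?Q x = tspace P x"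
  proof
    show "tmap P x (\<lambda>a. a) ` tspace ?Q x \<subseteq> tspace P x"
    proof
      fix C assume "C \<in> tmap P x (\<lambda>a. a) ` tspace ?Q x"
      then obtain s where s: "s \<in> dsum ?Q x" "C = tmap P x (\<lambda>a. a) (tclass ?Q x s)"
        unfolding tspace_def by blast
      then have "C = tclass P x s" using tmap_class[OF s(1)] by simp
      then show "C \<in> tspace P x" unfolding tspace_def using dsum_sub[OF s(1)] by blast
    qed
  next
    show "tspace P x \<subseteq> tmap P x (\<lambda>a. a) ` tspace ?Q x"
    proof
      fix C assume "C \<in> tspace P x"
      then obtain s where s: "s \<in> dsum P x" "C = tclass P x s" unfolding tspace_def by blast
      have s': "Rm ?r s \<in> dsum ?Q x" by (rule L_dsum[OF hD s(1)])
      have "vdiff s (Rm ?r s) \<in> lspan (trel P x)" by (rule L_diff[OF hP s(1)])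
      then have "C = tclass P x (Rm ?r s)" unfolding s(2) by (rule tclass_eq)
      also have "\<dots> = tmap P x (\<lambda>a. a) (tclass ?Q x (Rm ?r s))" using tmap_class[OF s'] by simp
      finally show "C \<in> tmap P x (\<lambda>a. a) ` tspace ?Q x" unfolding tspace_def using s' by blast
    qed
  qed
  show ?thesis using inj img by (simp add: bij_betw_def)
qed

end
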